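(* In the Poisson mining model of the context, call a block a lagger if no other block is mined during $(t_j-\Delta,t_j]$ where $t_j$ is its mining time, and a tailgater otherwise. Relabel every tailgater mined by an honest node as adversarial, so that the honest blocks are exactly the laggers mined by honest nodes. Then (i) the blocks are independently honest with probability $p=\rho e^{-\lambda\Delta}$ and adversarial with probability $1-p$; and (ii) every honest block is received by all honest nodes before the next honest block is mined, so that all honest blocks lie at distinct heights and every honest block mined after any time $\tau$ is higher than every honest block mined by time $\tau$.
   Context: Blocks are mined according to a homogeneous Poisson process of rate $\lambda>0$; independently, each block is mined by an honest node with probability $\rho$ and by the adversary otherwise. Block $j$ is mined at time $t_j$. An honest block mined at time $t$ extends a longest chain in its miner's view just before $t$ and is published immediately; if an honest node mines or receives a new longest chain at time $t$, all honest nodes receive it by time $t+\Delta$, with $\Delta\ge0$. *)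

theory Defs
  imports "HOL-Probability.Probability"
begin

text \<open>Block 0 is the genesis block, mined at time 0; block j (j \<ge> 1) is mined at
  time X 1 + ... + X j, where X k is the k-th inter-arrival time of the Poisson process.\<close>
definition mine_time :: "(nat \<Rightarrow> real) \<Rightarrow> nat \<Rightarrow> real" where
  "mine_time X j = (\<Sum>k\<in>{1..j}. X k)"

definition lagger :: "(nat \<Rightarrow> real) \<Rightarrow> real \<Rightarrow> nat \<Rightarrow> bool" where
  "lagger t \<Delta> j \<longleftrightarrow> (\<forall>i. i \<noteq> j \<longrightarrow> \<not> (t j - \<Delta> < t i \<and> t i \<le> t j))"

definition relabeled_honest :: "(nat \<Rightarrow> real) \<Rightarrow> (nat \<Rightarrow> bool) \<Rightarrow> real \<Rightarrow> nat \<Rightarrow> bool" where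
  "relabeled_honest t B \<Delta> j \<longleftrightarrow> B j \<and> lagger t \<Delta> j"

text \<open>An execution consistent with the protocol rules, given mining times t and the
  marks B (B j: block j is mined by an honest node).
  Hon: set of honest nodes; miner j: the honest node that mined block j (if B j);
  parent j: the block extended by block j; ht j: height (chain length) of block j;
  rcv n b: time at which node n receives (or, for its own blocks, mines) block b,
  \<infinity> if never.  The view of node n at time s is the set of b with rcv n b \<le> s; the view
  just before time s is the set of b with rcv n b < s.  A chain is identified with its tip.\<close>
definition valid_execution ::
  "(nat \<Rightarrow> real) \<Rightarrow> (nat \<Rightarrow> bool) \<Rightarrow> real \<Rightarrow> 'n set \<Rightarrow> (nat \<Rightarrow> 'n) \<Rightarrow> (nat \<Rightarrow> nat)
    \<Rightarrow> (nat \<Rightarrow> nat) \<Rightarrow> ('n \<Rightarrow> nat \<Rightarrow> ereal) \<Rightarrow> bool" where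
  "valid_execution t B \<Delta> Hon miner parent ht rcv \<longleftrightarrow>
     ht 0 = 0 \<and>
     (\<forall>j\<ge>1. parent j < j \<and> ht j = ht (parent j) + 1) \<and>
     (\<forall>n\<in>Hon. rcv n 0 \<le> 0) \<and>
     (\<forall>n\<in>Hon. \<forall>b. ereal (t b) \<le> rcv n b) \<and>
     (\<forall>n\<in>Hon. \<forall>b\<ge>1. rcv n (parent b) \<le> rcv n b) \<and>
     (\<forall>j\<ge>1. B j \<longrightarrow>
        miner j \<in> Hon \<and>
        rcv (miner j) j = ereal (t j) \<and>
        rcv (miner j) (parent j) < ereal (t j) \<and>
        (\<forall>b. rcv (miner j) b < ereal (t j) \<longrightarrow> ht b \<le> ht (parent j)) \<and>
        (\<forall>n\<in>Hon. rcv n j \<le> ereal (t j + \<Delta>))) \<and>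
     (\<forall>n\<in>Hon. \<forall>b s. rcv n b = ereal s \<and> (\<forall>b'. rcv n b' \<le> ereal s \<longrightarrow> ht b' \<le> ht b)
        \<longrightarrow> (\<forall>n'\<in>Hon. rcv n' b \<le> ereal (s + \<Delta>)))"

end

theory Submission
  imports Defs
begin
lemma mine_time_0[simp]: "mine_time X 0 = 0" by (simp add: mine_time_def)
lemma mine_time_Suc: "mine_time X (Suc j) = mine_time X j + X (Suc j)"
  unfolding mine_time_def by (simp add: sum.cl_ivl_Suc)
lemma mine_time_less:
  assumes pos: "\<forall>k\<ge>1. 0 < X k" and "i < j"
  shows "mine_time X i < mine_time X j"
  using assms(2)
proof (induction j)
  case 0 then show ?case by simp
next
  case (Suc j)
  have "0 < X (Suc j)" using pos by simp
  then show ?case using Suc by (cases "i = j") (auto simp: mine_time_Suc)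
qed
lemma mine_time_le:
  assumes pos: "\<forall>k\<ge>1. 0 < X k" and "i \<le> j"
  shows "mine_time X i \<le> mine_time X j"
  using mine_time_less[OF pos] assms(2) by (cases "i = j") (auto intro: less_imp_le)
lemma lagger_iff:
  assumes pos: "\<forall>k\<ge>1. 0 < X k" and ne: "X j \<noteq> \<Delta>" and j: "j \<ge> 1"
  shows "lagger (mine_time X) \<Delta> j \<longleftrightarrow> \<Delta> < X j"
proof -
  obtain m where m: "j = Suc m" using j by (cases j) auto
  have tj: "mine_time X j = mine_time X m + X j" using m by (simp add: mine_time_Suc)
  have Xj: "0 < X j" using pos j by auto
  show ?thesis
  proof
    assume "lagger (mine_time X) \<Delta> j"
    then have "\<not> (mine_time X j - \<Delta> < mine_time X m \<and> mine_time X m \<le> mine_time X j)"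
      unfolding lagger_def using m by auto
    then show "\<Delta> < X j" using tj Xj ne by auto
  next
    assume D: "\<Delta> < X j"
    show "lagger (mine_time X) \<Delta> j" unfolding lagger_def
    proof (intro allI impI)
      fix i assume "i \<noteq> j"
      then consider "i \<le> m" | "j < i" using m by linarith
      then show "\<not> (mine_time X j - \<Delta> < mine_time X i \<and> mine_time X i \<le> mine_time X j)"
      proof cases
        case 1 then have "mine_time X i \<le> mine_time X m" by (rule mine_time_le[OF pos])
        then show ?thesis using tj D by auto
      next
        case 2 then show ?thesis using mine_time_less[OF pos 2] by auto
      qed
    qed
  qed
qed

lemma part3:
  assumes good: "\<forall>k\<ge>1. 0 < X k \<and> X k \<noteq> \<Delta>"
    and V: "valid_execution (mine_time X) B \<Delta> Hon miner parent ht rcv"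
  shows "let t = mine_time X; H = relabeled_honest t B \<Delta> in
              (\<forall>i j. 1 \<le> i \<longrightarrow> i < j \<longrightarrow> H i \<longrightarrow> H j \<longrightarrow> (\<forall>n\<in>Hon. rcv n i < ereal (t j)))
            \<and> (\<forall>i j. 1 \<le> i \<longrightarrow> 1 \<le> j \<longrightarrow> i \<noteq> j \<longrightarrow> H i \<longrightarrow> H j \<longrightarrow> ht i \<noteq> ht j)
            \<and> (\<forall>\<tau> i j. 1 \<le> i \<longrightarrow> 1 \<le> j \<longrightarrow> H i \<longrightarrow> H j \<longrightarrow> t i \<le> \<tau> \<longrightarrow> \<tau> < t j
                   \<longrightarrow> ht i < ht j)"
proof -
  define t where "t = mine_time X"
  define H where "H = relabeled_honest t B \<Delta>"
  have pos: "\<forall>k\<ge>1. 0 < X k" using good by auto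
  have A: "\<forall>n\<in>Hon. rcv n i < ereal (t j)" if a: "1 \<le> i" "i < j" "H i" "H j" for i j
  proof
    fix n assume n: "n \<in> Hon"
    obtain m where m: "j = Suc m" using a(1,2) by (cases j) auto
    have tj: "t j = t m + X j" using m by (simp add: mine_time_Suc t_def)
    have "lagger t \<Delta> j" "B i" using a unfolding H_def relabeled_honest_def by auto
    then have "\<Delta> < X j" using lagger_iff[OF pos, of j \<Delta>] good a m unfolding t_def by auto
    moreover have "t i \<le> t m" unfolding t_def using pos a m by (intro mine_time_le) auto
    moreover have "rcv n i \<le> ereal (t i + \<Delta>)"
      using V \<open>B i\<close> a n unfolding valid_execution_def t_def by auto
    ultimately have "t i + \<Delta> < t j" using tj by linarith
    then have "ereal (t i + \<Delta>) < ereal (t j)" by simp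
    then show "rcv n i < ereal (t j)" using \<open>rcv n i \<le> ereal (t i + \<Delta>)\<close> by (rule order.strict_trans1[rotated])
  qed
  have C: "ht i < ht j" if "1 \<le> i" "i < j" "H i" "H j" for i j
  proof -
    have j1: "j \<ge> 1" using that by auto
    have Bj: "B j" using that unfolding H_def relabeled_honest_def by auto
    have mj: "miner j \<in> Hon" and hb: "\<forall>b. rcv (miner j) b < ereal (t j) \<longrightarrow> ht b \<le> ht (parent j)"
      and hp: "ht j = ht (parent j) + 1"
      using V Bj j1 unfolding valid_execution_def t_def by auto
    have "rcv (miner j) i < ereal (t j)" using A[OF that] mj by auto
    then show ?thesis using hb hp by fastforce
  qed
  have D1: "ht i \<noteq> ht j" if "1 \<le> i" "1 \<le> j" "i \<noteq> j" "H i" "H j" for i j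
    using C[of i j] C[of j i] that by (cases "i < j") auto
  have D2: "ht i < ht j" if "1 \<le> i" "1 \<le> j" "H i" "H j" "t i \<le> \<tau>" "\<tau> < t j" for \<tau> i j
  proof -
    have "i < j"
    proof (rule ccontr)
      assume "\<not> i < j"
      then have "t j \<le> t i" unfolding t_def by (intro mine_time_le[OF pos]) auto
      then show False using that by auto
    qed
    then show ?thesis using C that by auto
  qed
  show ?thesis unfolding Let_def t_def[symmetric] H_def[symmetric] using A D1 D2 by blast
qed
lemma (in prob_space) indep_vars_AE_cong:
  assumes ind: "indep_vars M' Y I"
    and rv: "\<And>i. i \<in> I \<Longrightarrow> random_variable (M' i) (X i)"
    and ae: "AE \<omega> in M. \<forall>i\<in>I. X i \<omega> = Y i \<omega>"
  shows "indep_vars M' X I"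
proof -
  have rvY: "\<And>i. i \<in> I \<Longrightarrow> random_variable (M' i) (Y i)" and
    iY: "indep_sets (\<lambda>i. { Y i -` A \<inter> space M | A. A \<in> sets (M' i)}) I"
    using ind unfolding indep_vars_def2 by auto
  show ?thesis unfolding indep_vars_def2
  proof (intro conjI ballI rv)
    show "indep_sets (\<lambda>i. { X i -` A \<inter> space M | A. A \<in> sets (M' i)}) I"
    proof (rule indep_setsI)
      fix i assume "i \<in> I"
      then show "{ X i -` A \<inter> space M | A. A \<in> sets (M' i)} \<subseteq> events"
        using rv measurable_sets by blast
    next
      fix A J assume J: "J \<noteq> {}" "J \<subseteq> I" "finite J"
        and A: "\<forall>j\<in>J. A j \<in> { X j -` A \<inter> space M | A. A \<in> sets (M' j)}"
      then have "\<forall>j\<in>J. \<exists>S. A j = X j -` S \<inter> space M \<and> S \<in> sets (M' j)" by blast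
      then obtain S where S: "\<And>j. j \<in> J \<Longrightarrow> A j = X j -` S j \<inter> space M \<and> S j \<in> sets (M' j)"
        by (metis bchoice)
      define A' where "A' j = Y j -` S j \<inter> space M" for j
      have evA: "A j \<in> events" if "j \<in> J" for j
        using S[OF that] rv[of j] that J measurable_sets by auto
      have evA': "A' j \<in> events" if "j \<in> J" for j
        using S[OF that] rvY[of j] that J measurable_sets unfolding A'_def by auto
      have eq: "prob (A j) = prob (A' j)" if "j \<in> J" for j
      proof (rule measure_eq_AE[OF _ evA[OF that] evA'[OF that]])
        show "AE x in M. (x \<in> A j) = (x \<in> A' j)"
          using ae by eventually_elim (use S[OF that] that J in \<open>auto simp: A'_def\<close>)
      qed
      have "prob (\<Inter>j\<in>J. A j) = prob (\<Inter>j\<in>J. A' j)"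
      proof (rule measure_eq_AE)
        show "AE x in M. (x \<in> (\<Inter>j\<in>J. A j)) = (x \<in> (\<Inter>j\<in>J. A' j))"
          using ae
        proof eventually_elim
          case (elim x)
          have "x \<in> A j \<longleftrightarrow> x \<in> A' j" if "j \<in> J" for j
            using S[OF that] that J elim by (auto simp: A'_def)
          then show ?case by blast
        qed
        show "(\<Inter>j\<in>J. A j) \<in> events" using evA J by (intro sets.finite_INT) auto
        show "(\<Inter>j\<in>J. A' j) \<in> events" using evA' J by (intro sets.finite_INT) auto
      qed
      also have "\<dots> = (\<Prod>j\<in>J. prob (A' j))"
        using J S by (intro indep_setsD[OF iY]) (auto simp: A'_def)
      also have "\<dots> = (\<Prod>j\<in>J. prob (A j))" using eq by simp
      finally show "prob (\<Inter>j\<in>J. A j) = (\<Prod>j\<in>J. prob (A j))" .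
    qed
  qed
qed
theorem mainTheorem8:
  fixes M :: "'a measure" and X :: "nat \<Rightarrow> 'a \<Rightarrow> real" and B :: "nat \<Rightarrow> 'a \<Rightarrow> bool"
    and lam \<rho> \<Delta> :: real
  assumes "prob_space M"
    and "lam > 0" and "0 \<le> \<rho>" and "\<rho> \<le> 1" and "\<Delta> \<ge> 0"
    and "\<And>k. k \<ge> 1 \<Longrightarrow> distributed M lborel (X k) (exponential_density lam)"
    and "\<And>k. k \<ge> 1 \<Longrightarrow> B k \<in> measurable M (count_space UNIV)"
    and "\<And>k. k \<ge> 1 \<Longrightarrow> measure M {\<omega> \<in> space M. B k \<omega>} = \<rho>"
    and "prob_space.indep_sets M
           (\<lambda>i. case i of
                   Inl k \<Rightarrow> sets (vimage_algebra (space M) (X k) borel)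
                 | Inr k \<Rightarrow> sets (vimage_algebra (space M) (B k) (count_space UNIV)))
           (Inl ` {1..} \<union> Inr ` {1..})"
  shows "prob_space.indep_vars M (\<lambda>_. count_space UNIV)
           (\<lambda>j \<omega>. relabeled_honest (mine_time (\<lambda>k. X k \<omega>)) (\<lambda>k. B k \<omega>) \<Delta> j) {1..}
       \<and> (\<forall>j\<ge>1. measure M {\<omega> \<in> space M.
              relabeled_honest (mine_time (\<lambda>k. X k \<omega>)) (\<lambda>k. B k \<omega>) \<Delta> j} = \<rho> * exp (- lam * \<Delta>))
       \<and> (AE \<omega> in M. \<forall>(Hon :: 'n set) miner parent ht rcv.
            valid_execution (mine_time (\<lambda>k. X k \<omega>)) (\<lambda>k. B k \<omega>) \<Delta> Hon miner parent ht rcv \<longrightarrow>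
            (let t = mine_time (\<lambda>k. X k \<omega>); H = relabeled_honest t (\<lambda>k. B k \<omega>) \<Delta> in
              (\<forall>i j. 1 \<le> i \<longrightarrow> i < j \<longrightarrow> H i \<longrightarrow> H j \<longrightarrow> (\<forall>n\<in>Hon. rcv n i < ereal (t j)))
            \<and> (\<forall>i j. 1 \<le> i \<longrightarrow> 1 \<le> j \<longrightarrow> i \<noteq> j \<longrightarrow> H i \<longrightarrow> H j \<longrightarrow> ht i \<noteq> ht j)
            \<and> (\<forall>\<tau> i j. 1 \<le> i \<longrightarrow> 1 \<le> j \<longrightarrow> H i \<longrightarrow> H j \<longrightarrow> t i \<le> \<tau> \<longrightarrow> \<tau> < t j
                   \<longrightarrow> ht i < ht j)))"
proof -
  interpret P: prob_space M by fact
  note Xd = assms(6) and Bm = assms(7) and Bp = assms(8) and indA = assms(9)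
  define t where "t \<omega> = mine_time (\<lambda>k. X k \<omega>)" for \<omega>
  define H where "H = (\<lambda>j \<omega>. relabeled_honest (mine_time (\<lambda>k. X k \<omega>)) (\<lambda>k. B k \<omega>) \<Delta> j)"
  define H' where "H' j \<omega> = (B j \<omega> \<and> \<Delta> < X j \<omega>)" for j \<omega>
  define good where "good \<omega> = (\<forall>k\<ge>1. 0 < X k \<omega> \<and> X k \<omega> \<noteq> \<Delta>)" for \<omega>
  have Xm: "X k \<in> borel_measurable M" if "k \<ge> 1" for k
    using distributed_measurable[OF Xd[OF that]] by (simp add: measurable_cong_sets[OF refl sets_lborel])
  have tm: "(\<lambda>\<omega>. t \<omega> i) \<in> borel_measurable M" for i
    unfolding t_def mine_time_def by (intro borel_measurable_sum) (auto intro: Xm)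
  have Bpred: "Measurable.pred M (B j)" if "j \<ge> 1" for j
    using Bm[OF that] by simp
  have Hm: "Measurable.pred M (H j)" if "j \<ge> 1" for j
  proof -
    note [measurable] = tm Bpred[OF that]
    have "Measurable.pred M (\<lambda>\<omega>. B j \<omega> \<and> (\<forall>i. i \<noteq> j \<longrightarrow> \<not> (t \<omega> j - \<Delta> < t \<omega> i \<and> t \<omega> i \<le> t \<omega> j)))"
      by measurable
    then show ?thesis unfolding H_def relabeled_honest_def lagger_def t_def .
  qed
  have H'm: "Measurable.pred M (H' j)" if "j \<ge> 1" for j
  proof -
    note [measurable] = Xm[OF that] Bpred[OF that]
    show ?thesis unfolding H'_def by measurable
  qed
  have AEgood: "AE \<omega> in M. good \<omega>"
    unfolding good_def
  proof (subst AE_all_countable, intro allI)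
    fix k :: nat
    show "AE \<omega> in M. 1 \<le> k \<longrightarrow> 0 < X k \<omega> \<and> X k \<omega> \<noteq> \<Delta>"
    proof (cases "1 \<le> k")
      case False then show ?thesis by simp
    next
      case True
      have "\<P>(\<omega> in M. 0 < X k \<omega>) = 1"
        using P.exponential_distributedD_gt[OF Xd[OF True] _ assms(2), of 0] by simp
      then have a1: "AE \<omega> in M. 0 < X k \<omega>"
        using P.AE_prob_1 by fastforce
      have "emeasure M (X k -` {\<Delta>} \<inter> space M) = (\<integral>\<^sup>+x. ennreal (exponential_density lam x) * indicator {\<Delta>} x \<partial>lborel)"
        by (rule distributed_emeasure[OF Xd[OF True]]) simp
      also have "\<dots> = 0"
        by (subst nn_integral_indicator_singleton) auto
      finally have "X k -` {\<Delta>} \<inter> space M \<in> null_sets M"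
        using measurable_sets[OF Xm[OF True], of "{\<Delta>}"] by auto
      then have a2: "AE \<omega> in M. X k \<omega> \<noteq> \<Delta>"
        by (rule AE_I') auto
      show ?thesis using a1 a2 by eventually_elim auto
    qed
  qed
  have HH': "H j \<omega> = H' j \<omega>" if "good \<omega>" "j \<ge> 1" for j \<omega>
    using that lagger_iff[of "\<lambda>k. X k \<omega>" j \<Delta>]
    unfolding H_def H'_def relabeled_honest_def good_def by auto
  have AEeq: "AE \<omega> in M. \<forall>j\<in>{1..}. H j \<omega> = H' j \<omega>"
    using AEgood by eventually_elim (auto simp: HH')
  define E where "E = (\<lambda>i. case i of
                   Inl k \<Rightarrow> sets (vimage_algebra (space M) (X k) borel)
                 | Inr k \<Rightarrow> sets (vimage_algebra (space M) (B k) (count_space UNIV)))"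
  have indE: "P.indep_sets E (Inl ` {1..} \<union> Inr ` {1..})" using indA unfolding E_def .
  have U: "(\<Union>j\<in>{1::nat..}. {Inl j, Inr j}) = Inl ` {1..} \<union> Inr ` {1::nat..}" by auto
  have col: "P.indep_sets (\<lambda>j. sigma_sets (space M) (\<Union>i\<in>{Inl j, Inr j}. E i)) {1..}"
  proof (rule P.indep_sets_collect_sigma)
    show "P.indep_sets E (\<Union>j\<in>{1..}. {Inl j, Inr j})" using indE U by simp
    show "Int_stable (E i)" for i by (cases i) (simp_all add: E_def sets.Int_stable)
    show "disjoint_family_on (\<lambda>j. {Inl j, Inr j}) {1..}" by (auto simp: disjoint_family_on_def)
  qed
  define SB where "SB j = {\<omega> \<in> space M. B j \<omega>}" for j
  define SX where "SX j = {\<omega> \<in> space M. \<Delta> < X j \<omega>}" for j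
  have SBE: "SB j \<in> E (Inr j)" for j
  proof -
    have "SB j \<in> {B j -` A \<inter> space M | A. A \<in> sets (count_space UNIV)}"
      unfolding SB_def by (intro CollectI exI[of _ "{True}"]) auto
    then show ?thesis unfolding E_def by (simp add: sets_vimage_algebra2)
  qed
  have SXE: "SX j \<in> E (Inl j)" for j
  proof -
    have "SX j \<in> {X j -` A \<inter> space M | A. A \<in> sets borel}"
      unfolding SX_def by (intro CollectI exI[of _ "{\<Delta><..}"]) auto
    then show ?thesis unfolding E_def by (simp add: sets_vimage_algebra2)
  qed
  have indH': "P.indep_vars (\<lambda>_. count_space UNIV) H' {1..}"
    unfolding P.indep_vars_def2
  proof (intro conjI ballI)
    fix j :: nat assume "j \<in> {1..}"
    then show "P.random_variable (count_space UNIV) (H' j)" using H'm by simp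
  next
    show "P.indep_sets (\<lambda>i. {H' i -` A \<inter> space M |A. A \<in> sets (count_space UNIV)}) {1..}"
    proof (rule P.indep_sets_mono_sets[OF col])
      fix j :: nat assume "j \<in> {1..}"
      let ?G = "sigma_sets (space M) (\<Union>i\<in>{Inl j, Inr j}. E i)"
      have sub: "(\<Union>i\<in>{Inl j, Inr j}. E i) \<subseteq> Pow (space M)"
        unfolding E_def using sets.sets_into_space by fastforce
      interpret G: sigma_algebra "space M" ?G by (rule sigma_algebra_sigma_sets[OF sub])
      have "SB j \<in> ?G" "SX j \<in> ?G" using SBE SXE by (auto intro: sigma_sets.Basic)
      then have I: "SB j \<inter> SX j \<in> ?G" by (rule G.Int)
      show "{H' j -` A \<inter> space M |A. A \<in> sets (count_space UNIV)} \<subseteq> ?G"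
      proof safe
        fix A :: "bool set"
        have "H' j -` A \<inter> space M = (if True \<in> A then SB j \<inter> SX j else {}) \<union>
               (if False \<in> A then space M - SB j \<inter> SX j else {})"
        proof (rule set_eqI)
          fix \<omega>
          show "\<omega> \<in> H' j -` A \<inter> space M \<longleftrightarrow> \<omega> \<in> (if True \<in> A then SB j \<inter> SX j else {}) \<union>
               (if False \<in> A then space M - SB j \<inter> SX j else {})"
          proof (cases "\<omega> \<in> SB j \<inter> SX j")
            case True
            then have "\<omega> \<in> space M" "H' j \<omega>" by (auto simp: SB_def SX_def H'_def)
            then show ?thesis using True by simp
          next
            case False
            show ?thesis
            proof (cases "\<omega> \<in> space M")
              case True
              then have "\<not> H' j \<omega>" using False by (auto simp: SB_def SX_def H'_def)
              then show ?thesis using True False by simp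
            qed (use False in simp)
          qed
        qed
        also have "\<dots> \<in> ?G"
          using I G.compl_sets[OF I] G.empty_sets by (intro G.Un) (simp_all only: if_True if_False simp_thms split: if_split)
        finally show "H' j -` A \<inter> space M \<in> ?G" .
      qed
    qed
  qed
  have indH: "P.indep_vars (\<lambda>_. count_space UNIV) H {1..}"
    by (rule P.indep_vars_AE_cong[OF indH' _ AEeq]) (use Hm in \<open>auto\<close>)
  have prob: "measure M {\<omega> \<in> space M. H j \<omega>} = \<rho> * exp (- lam * \<Delta>)" if j: "j \<ge> 1" for j
  proof -
    have "measure M {\<omega> \<in> space M. H j \<omega>} = measure M {\<omega> \<in> space M. H' j \<omega>}"
      by (rule measure_eq_AE) (use AEeq j Hm[OF j] H'm[OF j] in \<open>auto elim!: eventually_mono\<close>)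
    also have "{\<omega> \<in> space M. H' j \<omega>} = (\<Inter>i\<in>{Inl j, Inr j}. (if i = Inl j then SX j else SB j))"
      by (auto simp: H'_def SX_def SB_def)
    also have "measure M \<dots> = (\<Prod>i\<in>{Inl j, Inr j}. measure M (if i = Inl j then SX j else SB j))"
      by (rule P.indep_setsD[OF indE]) (use j SXE SBE in auto)
    also have "\<dots> = measure M (SX j) * measure M (SB j)" by simp
    also have "measure M (SX j) = exp (- \<Delta> * lam)"
      unfolding SX_def by (rule P.exponential_distributedD_gt[OF Xd[OF j] assms(5) assms(2)])
    also have "measure M (SB j) = \<rho>" unfolding SB_def by (rule Bp[OF j])
    finally show ?thesis by (simp add: mult.commute)
  qed
  have part: "AE \<omega> in M. \<forall>(Hon :: 'n set) miner parent ht rcv.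
            valid_execution (mine_time (\<lambda>k. X k \<omega>)) (\<lambda>k. B k \<omega>) \<Delta> Hon miner parent ht rcv \<longrightarrow>
            (let t = mine_time (\<lambda>k. X k \<omega>); H = relabeled_honest t (\<lambda>k. B k \<omega>) \<Delta> in
              (\<forall>i j. 1 \<le> i \<longrightarrow> i < j \<longrightarrow> H i \<longrightarrow> H j \<longrightarrow> (\<forall>n\<in>Hon. rcv n i < ereal (t j)))
            \<and> (\<forall>i j. 1 \<le> i \<longrightarrow> 1 \<le> j \<longrightarrow> i \<noteq> j \<longrightarrow> H i \<longrightarrow> H j \<longrightarrow> ht i \<noteq> ht j)
            \<and> (\<forall>\<tau> i j. 1 \<le> i \<longrightarrow> 1 \<le> j \<longrightarrow> H i \<longrightarrow> H j \<longrightarrow> t i \<le> \<tau> \<longrightarrow> \<tau> < t j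
                   \<longrightarrow> ht i < ht j))"
    using AEgood
  proof eventually_elim
    case (elim \<omega>)
    then have g: "\<forall>k\<ge>1. 0 < X k \<omega> \<and> X k \<omega> \<noteq> \<Delta>" unfolding good_def .
    show ?case by (intro allI impI part3[OF g])
  qed
  show ?thesis
    apply (intro conjI)
    subgoal using indH unfolding H_def .
    subgoal using prob unfolding H_def by simp
    subgoal by (rule part)
    done
qed

end
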